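(* (5) $\overline{\mathcal{H}_{\mbox{s-conv}}(S^n)}\subset\mathcal{H}^\circ(S^n)$; (6) $\bigcirc(\mathcal{H}_{\mbox{s-conv}}(S^n))\neq\mathcal{H}_{\mbox{s-conv}}(S^n)$; (7) $\bigcirc(\overline{\mathcal{H}_{\mbox{s-conv}}(S^n)})=\overline{\mathcal{H}_{\mbox{s-conv}}(S^n)}$; (8) the restriction of $\bigcirc$ to $\overline{\mathcal{H}_{\mbox{s-conv}}(S^n)}$ is injective. Here $\bigcirc(W)=W^\circ$.
   Context: $S^n$ is the unit sphere in $\mathbb{R}^{n+1}$, $n\ge1$; $|PQ|=\arccos(P\cdot Q)$. $H(P)=\{Q\in S^n:P\cdot Q\ge0\}$ and $W^\circ=\bigcap_{P\in W}H(P)$. $\mathcal{H}(S^n)$ is the set of non-empty closed subsets of $S^n$ with the Pompeiu-Hausdorff metric $h(A,B)=\max\{\max_{x\in A}\min_{y\in B}|xy|,\ \max_{y\in B}\min_{x\in A}|xy|\}$, and $\mathcal{H}^\circ(S^n)=\{W\in\mathcal{H}(S^n):W^\circ\ne\emptyset\}$. A subset is hemispherical if it is disjoint from $H(P)$ for some $P\in S^n$. For $A,B$ in a hemispherical set, the arc $AB=\{((1-t)A+tB)/\|(1-t)A+tB\|:0\le t\le1\}$; a hemispherical set $W$ is spherical convex if $AB\subset W$ for all $A,B\in W$. $\mathcal{H}_{\mbox{s-conv}}(S^n)$ is the set of non-empty closed spherical convex subsets of $S^n$, and $\overline{\mathcal{H}_{\mbox{s-conv}}(S^n)}$ is its closure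 in $(\mathcal{H}(S^n),h)$. *)

theory Defs
  imports "HOL-Analysis.Analysis"
begin

text \<open>The unit sphere S^n is modelled as sphere 0 1 in a Euclidean space of
dimension n+1 (the type 'a), with n \<ge> 1 meaning DIM('a) \<ge> 2.\<close>

definition sdist :: "'a::euclidean_space \<Rightarrow> 'a \<Rightarrow> real" where
  "sdist P Q = arccos (P \<bullet> Q)"

definition hemi :: "'a::euclidean_space \<Rightarrow> 'a set" where
  "hemi P = {Q \<in> sphere 0 1. P \<bullet> Q \<ge> 0}"

definition polar :: "'a::euclidean_space set \<Rightarrow> 'a set" where
  "polar W = sphere 0 1 \<inter> (\<Inter>P\<in>W. hemi P)"

definition hdist :: "'a::euclidean_space set \<Rightarrow> 'a set \<Rightarrow> real" where
  "hdist A B = max (SUP x\<in>A. INF y\<in>B. sdist x y) (SUP y\<in>B. INF x\<in>A. sdist x y)"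

definition Hspace :: "'a::euclidean_space set set" where
  "Hspace = {W. W \<subseteq> sphere 0 1 \<and> W \<noteq> {} \<and> closed W}"

definition Hpolar :: "'a::euclidean_space set set" where
  "Hpolar = {W \<in> Hspace. polar W \<noteq> {}}"

definition hemispherical :: "'a::euclidean_space set \<Rightarrow> bool" where
  "hemispherical W \<longleftrightarrow> W \<subseteq> sphere 0 1 \<and> (\<exists>P\<in>sphere 0 1. W \<inter> hemi P = {})"

definition sarc :: "'a::euclidean_space \<Rightarrow> 'a \<Rightarrow> 'a set" where
  "sarc A B = {((1 - t) *\<^sub>R A + t *\<^sub>R B) /\<^sub>R norm ((1 - t) *\<^sub>R A + t *\<^sub>R B) | t. 0 \<le> t \<and> t \<le> 1}"

definition s_convex :: "'a::euclidean_space set \<Rightarrow> bool" where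
  "s_convex W \<longleftrightarrow> hemispherical W \<and> (\<forall>A\<in>W. \<forall>B\<in>W. sarc A B \<subseteq> W)"

definition Hsconv :: "'a::euclidean_space set set" where
  "Hsconv = {W \<in> Hspace. s_convex W}"

definition hclosure :: "'a::euclidean_space set set \<Rightarrow> 'a set set" where
  "hclosure F = {W \<in> Hspace. \<forall>e>0. \<exists>K\<in>F. hdist W K < e}"

end

theory Submission
  imports Defs
begin

lemma inner_sphere_bounds:
  assumes "x \<in> sphere (0::'a::euclidean_space) 1" "y \<in> sphere 0 1"
  shows "-1 \<le> x \<bullet> y" "x \<bullet> y \<le> 1"
proof -
  have "\<bar>x \<bullet> y\<bar> \<le> norm x * norm y" by (rule Cauchy_Schwarz_ineq2)
  with assms show "-1 \<le> x \<bullet> y" "x \<bullet> y \<le> 1" by auto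
qed

lemma dist_sq_sphere:
  assumes "x \<in> sphere (0::'a::euclidean_space) 1" "y \<in> sphere 0 1"
  shows "(dist x y)\<^sup>2 = 2 - 2 * (x \<bullet> y)"
proof -
  have "(dist x y)\<^sup>2 = (x - y) \<bullet> (x - y)" by (simp add: dist_norm power2_norm_eq_inner)
  also have "\<dots> = x \<bullet> x + y \<bullet> y - 2 * (x \<bullet> y)" by (simp add: inner_diff inner_commute)
  also have "\<dots> = 2 - 2 * (x \<bullet> y)" using assms by (simp add: dot_square_norm)
  finally show ?thesis .
qed

lemma dist_le_sdist:
  assumes "x \<in> sphere (0::'a::euclidean_space) 1" "y \<in> sphere 0 1"
  shows "dist x y \<le> sdist x y"
proof -
  define t where "t = x \<bullet> y"
  have t: "-1 \<le> t" "t \<le> 1" using inner_sphere_bounds[OF assms] t_def by auto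
  define th where "th = arccos t"
  have th: "0 \<le> th" "cos th = t" using t arccos_bounded th_def by auto
  have "(dist x y)\<^sup>2 = 2 - 2 * cos th" using dist_sq_sphere[OF assms] th t_def by simp
  also have "\<dots> = 4 * (sin (th/2))\<^sup>2" using cos_double_sin[of "th/2"] by simp
  also have "\<dots> \<le> 4 * (th/2)\<^sup>2"
  proof -
    have "\<bar>sin (th/2)\<bar> \<le> \<bar>th/2\<bar>" by (rule abs_sin_x_le_abs_x)
    then have "(sin (th/2))\<^sup>2 \<le> (th/2)\<^sup>2"
      by (metis abs_ge_zero power2_abs power_mono)
    then show ?thesis by simp
  qed
  also have "\<dots> = th\<^sup>2" by (simp add: power2_eq_square)
  finally have "(dist x y)\<^sup>2 \<le> th\<^sup>2" .
  then have "dist x y \<le> th" using th(1) by (rule power2_le_imp_le)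
  then show ?thesis by (simp add: sdist_def th_def t_def)
qed

lemma sdist_less:
  assumes "x \<in> sphere (0::'a::euclidean_space) 1" "y \<in> sphere 0 1" "0 < e" "e \<le> pi"
    and "dist x y < sqrt (2 - 2 * cos e)"
  shows "sdist x y < e"
proof -
  have c: "-1 \<le> cos e" "cos e \<le> 1" by auto
  have "(dist x y)\<^sup>2 < 2 - 2 * cos e"
    using assms(5) by (metis real_sqrt_less_iff real_sqrt_abs abs_of_nonneg zero_le_dist power2_eq_square real_sqrt_pow2_iff order.strict_trans1 sqrt_le_D zero_le_power2 less_le_not_le real_less_rsqrt)
  then have "cos e < x \<bullet> y" using dist_sq_sphere[OF assms(1,2)] by simp
  then have "arccos (x \<bullet> y) < arccos (cos e)"
    using arccos_less_arccos[of "cos e" "x \<bullet> y"] inner_sphere_bounds[OF assms(1,2)] by simp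
  then show ?thesis using arccos_cos[of e] assms by (simp add: sdist_def)
qed


definition approx :: "'a::euclidean_space set \<Rightarrow> 'a set \<Rightarrow> real \<Rightarrow> bool" where
  "approx A B d \<longleftrightarrow> (\<forall>x\<in>A. \<exists>y\<in>B. dist x y < d) \<and> (\<forall>y\<in>B. \<exists>x\<in>A. dist x y < d)"

lemma sdist_bounds:
  assumes "x \<in> sphere (0::'a::euclidean_space) 1" "y \<in> sphere 0 1"
  shows "0 \<le> sdist x y" "sdist x y \<le> pi"
  using arccos_bounded inner_sphere_bounds[OF assms] by (auto simp: sdist_def)

lemma bdd_below_sdist1:
  assumes "A \<subseteq> sphere (0::'a::euclidean_space) 1" "x \<in> sphere 0 1"
  shows "bdd_below ((\<lambda>y. sdist x y) ` A)"
proof (rule bdd_belowI[of _ 0])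
  fix z assume "z \<in> (\<lambda>y. sdist x y) ` A"
  then obtain y where "y \<in> A" "z = sdist x y" by auto
  then show "0 \<le> z" using sdist_bounds(1)[of x y] assms by auto
qed

lemma bdd_below_sdist2:
  assumes "A \<subseteq> sphere (0::'a::euclidean_space) 1" "y \<in> sphere 0 1"
  shows "bdd_below ((\<lambda>x. sdist x y) ` A)"
proof (rule bdd_belowI[of _ 0])
  fix z assume "z \<in> (\<lambda>x. sdist x y) ` A"
  then obtain x where "x \<in> A" "z = sdist x y" by auto
  then show "0 \<le> z" using sdist_bounds(1)[of x y] assms by auto
qed

lemma hdist_approx:
  fixes A B :: "'a::euclidean_space set"
  assumes A: "A \<subseteq> sphere 0 1" "A \<noteq> {}" and B: "B \<subseteq> sphere 0 1" "B \<noteq> {}"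
    and h: "hdist A B < e"
  shows "approx A B e"
  unfolding approx_def
proof (intro conjI ballI)
  fix x assume x: "x \<in> A"
  have bb: "bdd_below ((\<lambda>y. sdist x y) ` B)"
    using x A B by (intro bdd_below_sdist1) auto
  have ba: "bdd_above ((\<lambda>x. INF y\<in>B. sdist x y) ` A)"
  proof (intro bdd_aboveI[of _ pi])
    fix z assume "z \<in> (\<lambda>x. INF y\<in>B. sdist x y) ` A"
    then obtain x' where x': "x' \<in> A" "z = (INF y\<in>B. sdist x' y)" by auto
    obtain y where "y \<in> B" using B by auto
    have "(INF y\<in>B. sdist x' y) \<le> sdist x' y"
      by (rule cINF_lower[OF bdd_below_sdist1[of B x'] \<open>y \<in> B\<close>]) (use x' A B in auto)
    also have "\<dots> \<le> pi" by (rule sdist_bounds(2)) (use x' \<open>y \<in> B\<close> A B in blast)+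
    finally show "z \<le> pi" using x' by simp
  qed
  have "(INF y\<in>B. sdist x y) \<le> (SUP x\<in>A. INF y\<in>B. sdist x y)"
    by (rule cSUP_upper[OF x ba])
  also have "\<dots> < e" using h by (simp add: hdist_def)
  finally have "(INF y\<in>B. sdist x y) < e" .
  then obtain y where y: "y \<in> B" "sdist x y < e" using cINF_less_iff[OF B(2) bb] by auto
  then show "\<exists>y\<in>B. dist x y < e" using dist_le_sdist[of x y] x A B by force
next
  fix y assume y: "y \<in> B"
  have bb: "bdd_below ((\<lambda>x. sdist x y) ` A)"
    using y A B by (intro bdd_below_sdist2) auto
  have ba: "bdd_above ((\<lambda>y. INF x\<in>A. sdist x y) ` B)"
  proof (intro bdd_aboveI[of _ pi])
    fix z assume "z \<in> (\<lambda>y. INF x\<in>A. sdist x y) ` B"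
    then obtain y' where y': "y' \<in> B" "z = (INF x\<in>A. sdist x y')" by auto
    obtain x where "x \<in> A" using A by auto
    have "(INF x\<in>A. sdist x y') \<le> sdist x y'"
      by (rule cINF_lower[OF bdd_below_sdist2[of A y'] \<open>x \<in> A\<close>]) (use y' A B in auto)
    also have "\<dots> \<le> pi" by (rule sdist_bounds(2)) (use y' \<open>x \<in> A\<close> A B in blast)+
    finally show "z \<le> pi" using y' by simp
  qed
  have "(INF x\<in>A. sdist x y) \<le> (SUP y\<in>B. INF x\<in>A. sdist x y)"
    by (rule cSUP_upper[OF y ba])
  also have "\<dots> < e" using h by (simp add: hdist_def)
  finally have "(INF x\<in>A. sdist x y) < e" .
  then obtain x where x: "x \<in> A" "sdist x y < e" using cINF_less_iff[OF A(2) bb] by auto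
  then show "\<exists>x\<in>A. dist x y < e" using dist_le_sdist[of x y] y A B by force
qed

lemma approx_hdist:
  fixes A B :: "'a::euclidean_space set"
  assumes A: "A \<subseteq> sphere 0 1" "A \<noteq> {}" and B: "B \<subseteq> sphere 0 1" "B \<noteq> {}"
    and e: "0 < e" "e \<le> pi" and ap: "approx A B (sqrt (2 - 2 * cos (e/2)))"
  shows "hdist A B < e"
proof -
  have e2: "0 < e/2" "e/2 \<le> pi" using e by auto
  have 1: "(SUP x\<in>A. INF y\<in>B. sdist x y) \<le> e/2"
  proof (rule cSUP_least[OF A(2)])
    fix x assume x: "x \<in> A"
    then obtain y where y: "y \<in> B" "dist x y < sqrt (2 - 2 * cos (e/2))" using ap by (auto simp: approx_def)
    have "(INF y\<in>B. sdist x y) \<le> sdist x y"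
      by (rule cINF_lower[OF bdd_below_sdist1[of B x] y(1)]) (use x A B in auto)
    also have "\<dots> < e/2" by (rule sdist_less[OF _ _ e2 y(2)]) (use x y A B in auto)
    finally show "(INF y\<in>B. sdist x y) \<le> e/2" by simp
  qed
  have 2: "(SUP y\<in>B. INF x\<in>A. sdist x y) \<le> e/2"
  proof (rule cSUP_least[OF B(2)])
    fix y assume y: "y \<in> B"
    then obtain x where x: "x \<in> A" "dist x y < sqrt (2 - 2 * cos (e/2))" using ap by (auto simp: approx_def)
    have "(INF x\<in>A. sdist x y) \<le> sdist x y"
      by (rule cINF_lower[OF bdd_below_sdist2[of A y] x(1)]) (use y A B in auto)
    also have "\<dots> < e/2" by (rule sdist_less[OF _ _ e2 x(2)]) (use x y A B in auto)
    finally show "(INF x\<in>A. sdist x y) \<le> e/2" by simp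
  qed
  show ?thesis using 1 2 e by (simp add: hdist_def)
qed

lemma cos_half_lt1: "0 < e \<Longrightarrow> e \<le> pi \<Longrightarrow> cos (e/2) < 1"
  using cos_monotone_0_pi[of 0 "e/2"] by simp

lemma cl_approx:
  assumes "W \<in> hclosure (Hsconv :: 'a::euclidean_space set set)" "d > 0"
  shows "\<exists>K\<in>Hsconv. approx W K d"
proof -
  obtain K where K: "K \<in> Hsconv" "hdist W K < d" using assms by (auto simp: hclosure_def)
  have "approx W K d"
    by (rule hdist_approx) (use K assms in \<open>auto simp: hclosure_def Hspace_def Hsconv_def\<close>)
  then show ?thesis using K by blast
qed

lemma approx_cl:
  assumes W: "W \<in> (Hspace :: 'a::euclidean_space set set)"
    and ap: "\<And>d. d > 0 \<Longrightarrow> \<exists>K\<in>Hsconv. approx W K d"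
  shows "W \<in> hclosure Hsconv"
  unfolding hclosure_def
proof (intro CollectI conjI W allI impI)
  fix e :: real assume "e > 0"
  define e' where "e' = min e pi"
  have e': "0 < e'" "e' \<le> pi" "e' \<le> e" using \<open>e > 0\<close> pi_gt_zero by (auto simp: e'_def)
  have "0 < 2 - 2 * cos (e'/2)" using cos_half_lt1[OF e'(1,2)] by simp
  then have sq: "0 < sqrt (2 - 2 * cos (e'/2))" by simp
  obtain K where K: "K \<in> Hsconv" "approx W K (sqrt (2 - 2 * cos (e'/2)))" using ap[OF sq] by blast
  have "hdist W K < e'"
    by (rule approx_hdist) (use K W e' in \<open>auto simp: Hspace_def Hsconv_def\<close>)
  then show "\<exists>K\<in>Hsconv. hdist W K < e" using K(1) e'(3) by force
qed


lemma norm_normalize_diff: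
  fixes x z :: "'a::real_normed_vector"
  assumes "x \<noteq> 0" "z \<noteq> 0"
  shows "norm (x /\<^sub>R norm x - z /\<^sub>R norm z) \<le> 2 * norm (x - z) / norm x"
proof -
  have nx: "norm x > 0" and nz: "norm z > 0" using assms by auto
  have eq: "x /\<^sub>R norm x - z /\<^sub>R norm z = (x - z) /\<^sub>R norm x + ((1/norm x - 1/norm z) *\<^sub>R z)"
    by (simp add: algebra_simps divide_inverse)
  have "norm ((1/norm x - 1/norm z) *\<^sub>R z) = \<bar>1/norm x - 1/norm z\<bar> * norm z" by simp
  also have "\<dots> = \<bar>norm z - norm x\<bar> / norm x"
  proof -
    have "1/norm x - 1/norm z = (norm z - norm x) / (norm x * norm z)"
      using nx nz by (simp add: field_simps)
    then have "\<bar>1/norm x - 1/norm z\<bar> = \<bar>norm z - norm x\<bar> / (norm x * norm z)"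
      using nx nz by simp
    then show ?thesis using nz by simp
  qed
  also have "\<dots> \<le> norm (x - z) / norm x"
    using nx by (intro divide_right_mono) (auto simp: norm_triangle_ineq3 abs_minus_commute)
  finally have 2: "norm ((1/norm x - 1/norm z) *\<^sub>R z) \<le> norm (x - z) / norm x" .
  have "norm (x /\<^sub>R norm x - z /\<^sub>R norm z) \<le> norm ((x - z) /\<^sub>R norm x) + norm ((1/norm x - 1/norm z) *\<^sub>R z)"
    unfolding eq by (rule norm_triangle_ineq)
  moreover have "norm ((x - z) /\<^sub>R norm x) = norm (x - z) / norm x"
    using nx by (simp add: divide_inverse mult.commute)
  ultimately show ?thesis using 2 by linarith
qed

lemma sconv_cone:
  fixes K :: "'a::euclidean_space set"
  assumes "K \<in> Hsconv"
  shows "\<exists>p. \<forall>x\<in>convex hull K. p \<bullet> x < 0 \<and> x /\<^sub>R norm x \<in> K"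
proof -
  have Ks: "K \<subseteq> sphere 0 1" and sc: "s_convex K" using assms by (auto simp: Hsconv_def Hspace_def)
  obtain P where P: "P \<in> sphere 0 1" "K \<inter> hemi P = {}"
    using sc by (auto simp: s_convex_def hemispherical_def)
  have neg: "P \<bullet> k < 0" if "k \<in> K" for k
    using P that Ks by (force simp: hemi_def)
  have arcs: "sarc A B \<subseteq> K" if "A \<in> K" "B \<in> K" for A B
    using sc that by (auto simp: s_convex_def)
  define T where "T = {x. P \<bullet> x < 0 \<and> x /\<^sub>R norm x \<in> K}"
  have KT: "K \<subseteq> T"
    using neg Ks by (auto simp: T_def)
  have cT: "convex T"
    unfolding convex_def
  proof (intro ballI allI impI)
    fix x y :: 'a and u v :: real
    assume x: "x \<in> T" and y: "y \<in> T" and uv: "0 \<le> u" "0 \<le> v" "u + v = 1"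
    have x0: "x \<noteq> 0" using x by (auto simp: T_def)
    have y0: "y \<noteq> 0" using y by (auto simp: T_def)
    define a where "a = norm x"
    define b where "b = norm y"
    have ab: "a > 0" "b > 0" using x0 y0 by (auto simp: a_def b_def)
    define c where "c = u * a + v * b"
    have c: "c > 0"
    proof (cases "u = 0")
      case True then show ?thesis using uv ab by (simp add: c_def)
    next
      case False then show ?thesis using uv ab by (simp add: c_def add_pos_nonneg)
    qed
    define z where "z = u *\<^sub>R x + v *\<^sub>R y"
    have Pz: "P \<bullet> z < 0"
    proof -
      have "P \<bullet> z = u * (P \<bullet> x) + v * (P \<bullet> y)" by (simp add: z_def inner_add_right)
      moreover have "P \<bullet> x < 0" "P \<bullet> y < 0" using x y by (auto simp: T_def)
      ultimately have m: "max (P \<bullet> x) (P \<bullet> y) < 0" by simp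
      have "u * (P \<bullet> x) \<le> u * max (P \<bullet> x) (P \<bullet> y)" using uv by (intro mult_left_mono) auto
      moreover have "v * (P \<bullet> y) \<le> v * max (P \<bullet> x) (P \<bullet> y)" using uv by (intro mult_left_mono) auto
      ultimately have "P \<bullet> z \<le> (u + v) * max (P \<bullet> x) (P \<bullet> y)"
        using \<open>P \<bullet> z = _\<close> by (simp add: distrib_right)
      then show ?thesis using uv(3) m by (auto simp: max_def split: if_splits)
    qed
    then have z0: "z \<noteq> 0" by auto
    define s where "s = v * b / c"
    have s: "0 \<le> s" "s \<le> 1" "1 - s = u * a / c"
      using c ab uv by (auto simp: s_def c_def field_simps)
    define xh where "xh = x /\<^sub>R a"
    define yh where "yh = y /\<^sub>R b"
    have xh: "xh \<in> K" "yh \<in> K" using x y by (auto simp: T_def xh_def yh_def a_def b_def)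
    have e1: "(1 - s) / a = u / c" using s(3) ab by (simp add: field_simps)
    have e2: "s / b = v / c" using ab c by (simp add: s_def field_simps)
    have "(1 - s) *\<^sub>R xh + s *\<^sub>R yh = ((1 - s) / a) *\<^sub>R x + (s / b) *\<^sub>R y"
      by (simp add: xh_def yh_def divide_inverse)
    also have "\<dots> = (u / c) *\<^sub>R x + (v / c) *\<^sub>R y" by (simp only: e1 e2)
    also have "\<dots> = z /\<^sub>R c" by (simp add: z_def scaleR_add_right divide_inverse mult.commute)
    finally have comb: "(1 - s) *\<^sub>R xh + s *\<^sub>R yh = z /\<^sub>R c" .
    have "z /\<^sub>R norm z = ((1 - s) *\<^sub>R xh + s *\<^sub>R yh) /\<^sub>R norm ((1 - s) *\<^sub>R xh + s *\<^sub>R yh)"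
      unfolding comb using c by simp
    then have "z /\<^sub>R norm z \<in> sarc xh yh" using s unfolding sarc_def by blast
    then have "z /\<^sub>R norm z \<in> K" using arcs xh by blast
    then show "u *\<^sub>R x + v *\<^sub>R y \<in> T" using Pz by (simp add: T_def z_def)
  qed
  have "convex hull K \<subseteq> T" using KT cT by (rule hull_minimal[where S=convex])
  then show ?thesis by (auto simp: T_def)
qed


lemma polar_iff: "Q \<in> polar W \<longleftrightarrow> Q \<in> sphere 0 1 \<and> (\<forall>P\<in>W. 0 \<le> P \<bullet> Q)"
  by (auto simp: polar_def hemi_def)

lemma Hspace_compact:
  assumes "W \<in> (Hspace :: 'a::euclidean_space set set)"
  shows "compact W" "W \<subseteq> sphere 0 1" "W \<noteq> {}" "closed W"
proof -
  show ws: "W \<subseteq> sphere 0 1" "W \<noteq> {}" "closed W" using assms by (auto simp: Hspace_def)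
  have "bounded W" using bounded_subset[OF bounded_sphere ws(1)] .
  then show "compact W" using ws(3) by (simp add: compact_eq_bounded_closed)
qed

lemma cl_Hspace: "W \<in> hclosure F \<Longrightarrow> W \<in> Hspace"
  by (simp add: hclosure_def)

lemma cl_cconv:
  fixes W :: "'a::euclidean_space set"
  assumes W: "W \<in> hclosure Hsconv" and x: "x \<in> convex hull W" "x \<noteq> 0"
  shows "x /\<^sub>R norm x \<in> W"
proof -
  have Ws: "W \<subseteq> sphere 0 1" "closed W" using Hspace_compact[OF cl_Hspace[OF W]] by auto
  have nx: "norm x > 0" using x by simp
  have "x /\<^sub>R norm x \<in> closure W"
    unfolding closure_approachable
  proof (intro allI impI)
    fix \<epsilon> :: real assume "\<epsilon> > 0"
    define d where "d = min (\<epsilon>/2) (\<epsilon> * norm x / 4)"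
    have d: "d > 0" "d \<le> \<epsilon>/2" "d \<le> \<epsilon> * norm x / 4" using \<open>\<epsilon> > 0\<close> nx by (auto simp: d_def)
    obtain K where K: "K \<in> Hsconv" "approx W K d" using cl_approx[OF W d(1)] by blast
    obtain p where p: "\<And>y. y \<in> convex hull K \<Longrightarrow> p \<bullet> y < 0 \<and> y /\<^sub>R norm y \<in> K"
      using sconv_cone[OF K(1)] by blast
    obtain S u where S: "finite S" "S \<subseteq> W" "\<And>v. v \<in> S \<Longrightarrow> 0 \<le> u v" "sum u S = 1"
      "(\<Sum>v\<in>S. u v *\<^sub>R v) = x"
      using x(1) unfolding convex_hull_explicit by blast
    have ex: "\<forall>y\<in>W. \<exists>k. k \<in> K \<and> dist y k < d" using K(2) by (auto simp: approx_def)
    obtain f where f: "\<And>y. y \<in> W \<Longrightarrow> f y \<in> K \<and> dist y (f y) < d"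
      using bchoice[OF ex] by blast
    define x' where "x' = (\<Sum>v\<in>S. u v *\<^sub>R f v)"
    have x'K: "x' \<in> convex hull K"
      unfolding x'_def
      by (rule convex_sum[OF S(1) convex_convex_hull S(4) S(3)]) (use S(2) f in \<open>auto intro: hull_inc\<close>)
    have "norm (x - x') = norm (\<Sum>v\<in>S. u v *\<^sub>R (v - f v))"
      by (simp add: S(5)[symmetric] x'_def sum_subtractf scaleR_diff_right)
    also have "\<dots> \<le> (\<Sum>v\<in>S. norm (u v *\<^sub>R (v - f v)))" by (rule norm_sum)
    also have "\<dots> \<le> (\<Sum>v\<in>S. u v * d)"
    proof (rule sum_mono)
      fix v assume v: "v \<in> S"
      have "norm (v - f v) \<le> d" using f[of v] v S(2) by (auto simp: dist_norm)
      then show "norm (u v *\<^sub>R (v - f v)) \<le> u v * d" using S(3)[OF v]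
        by (simp add: mult_left_mono)
    qed
    also have "\<dots> = d" using S(4) by (simp add: sum_distrib_right[symmetric])
    finally have xx': "norm (x - x') \<le> d" .
    have x'0: "x' \<noteq> 0" using p[OF x'K] by auto
    have "x' /\<^sub>R norm x' \<in> K" using p[OF x'K] by auto
    then obtain w where w: "w \<in> W" "dist w (x' /\<^sub>R norm x') < d" using K(2) by (auto simp: approx_def)
    have "norm (x /\<^sub>R norm x - x' /\<^sub>R norm x') \<le> 2 * norm (x - x') / norm x"
      by (rule norm_normalize_diff[OF x(2) x'0])
    also have "\<dots> \<le> 2 * d / norm x" using xx' nx by (simp add: divide_right_mono)
    also have "\<dots> \<le> \<epsilon>/2" using d(3) nx by (simp add: field_simps)
    finally have "dist (x' /\<^sub>R norm x') (x /\<^sub>R norm x) \<le> \<epsilon>/2" by (simp add: dist_norm norm_minus_commute)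
    then have "dist w (x /\<^sub>R norm x) < \<epsilon>"
      using w(2) d(2) dist_triangle[of w "x /\<^sub>R norm x" "x' /\<^sub>R norm x'"] by linarith
    then show "\<exists>y\<in>W. dist y (x /\<^sub>R norm x) < \<epsilon>" using w(1) by blast
  qed
  then show ?thesis using Ws(2) by simp
qed

lemma cl_bipolar:
  fixes W :: "'a::euclidean_space set"
  assumes W: "W \<in> hclosure Hsconv"
  shows "polar (polar W) = W"
proof
  have Wc: "compact W" "W \<subseteq> sphere 0 1" "W \<noteq> {}" "closed W"
    using Hspace_compact[OF cl_Hspace[OF W]] by auto
  show "W \<subseteq> polar (polar W)"
  proof
    fix w assume w: "w \<in> W"
    have ws: "w \<in> sphere 0 1" using w Wc(2) by blast
    have pw: "0 \<le> P \<bullet> w" if "P \<in> polar W" for P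
    proof -
      have "0 \<le> w \<bullet> P" using that w by (simp add: polar_iff)
      then show ?thesis by (simp add: inner_commute)
    qed
    show "w \<in> polar (polar W)" by (subst polar_iff) (use ws pw in blast)
  qed
  show "polar (polar W) \<subseteq> W"
  proof
    fix x assume xpp: "x \<in> polar (polar W)"
    show "x \<in> W"
    proof (rule ccontr)
      assume xW: "x \<notin> W"
      have xs: "x \<in> sphere 0 1" using xpp by (simp add: polar_iff)
      define C where "C = conic hull W"
      have 0: "0 \<notin> W" using Wc(2) by auto
      have Ccl: "closed C" unfolding C_def using Wc(1) 0 by (intro closed_conic_hull) auto
      have "conic hull (convex hull W) \<subseteq> C"
      proof
        fix y assume "y \<in> conic hull (convex hull W)"
        then obtain c z where cz: "y = c *\<^sub>R z" "0 \<le> c" "z \<in> convex hull W"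
          by (auto simp: conic_hull_explicit)
        show "y \<in> C"
        proof (cases "z = 0")
          case True
          then show ?thesis using cz Wc(3) by (simp add: C_def)
        next
          case False
          have zz: "z /\<^sub>R norm z \<in> W" by (rule cl_cconv[OF W cz(3) False])
          have "y = (c * norm z) *\<^sub>R (z /\<^sub>R norm z)" using False cz(1) by simp
          moreover have "0 \<le> c * norm z" using cz(2) by simp
          ultimately show ?thesis using zz unfolding C_def conic_hull_explicit by blast
        qed
      qed
      moreover have "C \<subseteq> conic hull (convex hull W)"
        unfolding C_def by (intro hull_mono hull_subset)
      ultimately have "C = conic hull (convex hull W)" by blast
      then have Ccv: "convex C" by (simp add: convex_conic_hull)
      have xC: "x \<notin> C"
      proof
        assume "x \<in> C"
        then obtain c w where cw: "x = c *\<^sub>R w" "0 \<le> c" "w \<in> W"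
          by (auto simp: C_def conic_hull_explicit)
        have "norm x = c" using cw Wc(2) by auto
        then have "c = 1" using xs by simp
        then show False using cw xW by simp
      qed
      obtain a b where ab: "a \<bullet> x < b" "\<And>y. y \<in> C \<Longrightarrow> b < a \<bullet> y"
        using separating_hyperplane_closed_point[OF Ccv Ccl xC] by blast
      have "0 \<in> C" using Wc(3) by (simp add: C_def)
      then have b0: "b < 0" using ab(2)[of 0] by simp
      have aw: "0 \<le> a \<bullet> w" if w: "w \<in> W" for w
      proof (rule ccontr)
        assume "\<not> 0 \<le> a \<bullet> w"
        then have neg: "a \<bullet> w < 0" by simp
        define t where "t = b / (a \<bullet> w)"
        have t: "0 \<le> t" using neg b0 by (simp add: t_def divide_nonpos_neg)
        have "t *\<^sub>R w \<in> C" using w t unfolding C_def conic_hull_explicit by blast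
        then have "b < a \<bullet> (t *\<^sub>R w)" by (rule ab(2))
        moreover have "a \<bullet> (t *\<^sub>R w) = b" using neg by (simp add: t_def)
        ultimately show False by simp
      qed
      have a0: "a \<noteq> 0" using ab(1) b0 by auto
      define v where "v = a /\<^sub>R norm a"
      have vs: "v \<in> sphere 0 1" using a0 by (simp add: v_def)
      have "v \<in> polar W"
        unfolding polar_iff using vs aw a0
        by (auto simp: v_def inner_commute)
      then have "0 \<le> v \<bullet> x" using xpp by (auto simp: polar_iff)
      moreover have "v \<bullet> x < 0"
      proof -
        have "a \<bullet> x < 0" using ab(1) b0 by simp
        moreover have "inverse (norm a) > 0" using a0 by simp
        ultimately show ?thesis by (simp add: v_def mult_pos_neg)
      qed
      ultimately show False by simp
    qed
  qed
qed


lemma cl_nonorth: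
  fixes W :: "'a::euclidean_space set"
  assumes W: "W \<in> hclosure Hsconv"
  shows "\<exists>u\<in>W. \<exists>y\<in>polar W. 0 < u \<bullet> y"
proof (rule ccontr)
  assume "\<not> ?thesis"
  then have H: "\<And>u y. u \<in> W \<Longrightarrow> y \<in> polar W \<Longrightarrow> u \<bullet> y = 0"
    by (metis linorder_less_linear polar_iff not_less)
  define V where "V = polar W"
  have pV: "polar V = W" unfolding V_def by (rule cl_bipolar[OF W])
  have Wc: "W \<subseteq> sphere 0 1" "W \<noteq> {}" using Hspace_compact[OF cl_Hspace[OF W]] by auto
  have half: "(1/2::real) > 0" by simp
  obtain K where K: "K \<in> Hsconv" "approx W K (1/2)" using cl_approx[OF W half] by blast
  have KH: "K \<in> Hspace" using K(1) unfolding Hsconv_def by blast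
  note Kc = Hspace_compact[OF KH]
  obtain p where p: "\<And>y. y \<in> convex hull K \<Longrightarrow> p \<bullet> y < 0 \<and> y /\<^sub>R norm y \<in> K"
    using sconv_cone[OF K(1)] by blast
  define M where "M = span V"
  have Mcv: "convex M" "closed M" unfolding M_def
    by (auto intro: subspace_imp_convex closed_subspace)
  show False
  proof (cases "M \<inter> convex hull K = {}")
    case False
    then obtain x where x: "x \<in> M" "x \<in> convex hull K" by blast
    have x0: "x \<noteq> 0" using p[OF x(2)] by auto
    define m where "m = x /\<^sub>R norm x"
    have mK: "m \<in> K" using p[OF x(2)] by (simp add: m_def)
    have mM: "m \<in> span V" using x(1) unfolding m_def M_def by (simp add: span_mul)
    obtain w where w: "w \<in> W" "dist w m < 1/2" using K(2) mK by (auto simp: approx_def)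
    have "orthogonal w m"
      by (rule orthogonal_to_span[OF mM]) (use H w(1) in \<open>auto simp: orthogonal_def V_def\<close>)
    then have "w \<bullet> m = 0" by (simp add: orthogonal_def)
    moreover have "w \<in> sphere 0 1" using w(1) Wc(1) by blast
    moreover have "m \<in> sphere 0 1" using mK Kc(2) by blast
    ultimately have "(dist w m)\<^sup>2 = 2" using dist_sq_sphere[of w m] by simp
    moreover have "(dist w m)\<^sup>2 < (1/2)\<^sup>2"
      using w(2) by (intro power_strict_mono) auto
    ultimately show False by (simp add: power2_eq_square)
  next
    case True
    obtain a b where ab: "\<And>x. x \<in> M \<Longrightarrow> a \<bullet> x < b" "\<And>x. x \<in> convex hull K \<Longrightarrow> b < a \<bullet> x"
      using separating_hyperplane_closed_compact[OF Mcv convex_convex_hull compact_convex_hull[OF Kc(1)] _ True] Kc(3)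
      by auto
    have b0: "0 < b" using ab(1)[of 0] by (simp add: M_def span_zero)
    have av: "a \<bullet> v = 0" if v: "v \<in> V" for v
    proof (rule ccontr)
      assume nz: "a \<bullet> v \<noteq> 0"
      have "(b / (a \<bullet> v)) *\<^sub>R v \<in> M" unfolding M_def by (simp add: span_mul span_base v)
      then have "a \<bullet> ((b / (a \<bullet> v)) *\<^sub>R v) < b" by (rule ab(1))
      then show False using nz by simp
    qed
    obtain k0 where k0: "k0 \<in> K" using Kc(3) by blast
    have "b < a \<bullet> k0" by (rule ab(2)) (rule hull_inc[OF k0])
    then have a0: "a \<noteq> 0" using b0 by auto
    define ah where "ah = a /\<^sub>R norm a"
    have ahs: "ah \<in> sphere 0 1" "-ah \<in> sphere 0 1" using a0 by (auto simp: ah_def)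
    have "-ah \<in> polar V"
      unfolding polar_iff using ahs av by (auto simp: ah_def inner_commute)
    then have mah: "-ah \<in> W" using pV by simp
    obtain k where k: "k \<in> K" "dist (-ah) k < 1/2" using K(2) mah by (auto simp: approx_def)
    have "b < a \<bullet> k" by (rule ab(2)) (rule hull_inc[OF k(1)])
    then have "0 < ah \<bullet> k" using b0 a0 by (simp add: ah_def)
    moreover have "k \<in> sphere 0 1" using k(1) Kc(2) by blast
    ultimately have "(dist (-ah) k)\<^sup>2 > 2" using dist_sq_sphere[of "-ah" k] ahs by simp
    moreover have "(dist (-ah) k)\<^sup>2 < (1/2)\<^sup>2"
      using k(2) by (intro power_strict_mono) auto
    ultimately show False by (simp add: power2_eq_square)
  qed
qed


lemma closed_polar: "closed (polar (W :: 'a::euclidean_space set))"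
proof -
  have "polar W = sphere 0 1 \<inter> (\<Inter>P\<in>W. {Q. P \<bullet> Q \<ge> 0})"
    by (auto simp: polar_iff)
  moreover have "closed (\<Inter>P\<in>W. {Q. P \<bullet> Q \<ge> 0})"
    by (intro closed_INT ballI closed_halfspace_ge)
  ultimately show ?thesis by (simp add: closed_Int)
qed

lemma cl_polar:
  fixes W :: "'a::euclidean_space set"
  assumes W: "W \<in> hclosure Hsconv"
  shows "polar W \<in> hclosure Hsconv"
proof -
  obtain u y where uy: "u \<in> W" "y \<in> polar W" "0 < u \<bullet> y" using cl_nonorth[OF W] by blast
  have Wc: "W \<subseteq> sphere 0 1" using Hspace_compact[OF cl_Hspace[OF W]] by auto
  have us: "u \<in> sphere 0 1" using uy(1) Wc by blast
  have ys: "y \<in> sphere 0 1" using uy(2) by (simp add: polar_iff)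
  define c where "c = u \<bullet> y"
  have c: "0 < c" using uy(3) by (simp add: c_def)
  have pH: "polar W \<in> Hspace"
  proof -
    have "polar W \<subseteq> sphere 0 1" by (auto simp: polar_iff)
    then show ?thesis unfolding Hspace_def using uy(2) closed_polar[of W] by blast
  qed
  show ?thesis
  proof (rule approx_cl[OF pH])
    fix d :: real assume d: "d > 0"
    define e where "e = min (c/2) (d * c / 8)"
    have e: "0 < e" "e \<le> c/2" "e \<le> d * c / 8" using c d by (auto simp: e_def)
    define K where "K = polar W \<inter> {x. e \<le> u \<bullet> x}"
    have Ksub: "K \<subseteq> polar W" by (auto simp: K_def)
    have Ks: "K \<subseteq> sphere 0 1" using Ksub by (auto simp: polar_iff)
    have yK: "y \<in> K" using uy(2) e(2) c by (simp add: K_def c_def)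
    have Kcl: "closed K" unfolding K_def by (intro closed_Int closed_polar closed_halfspace_ge)
    have KinH: "K \<in> Hspace" using Ks yK Kcl by (auto simp: Hspace_def)
    have hemi: "hemispherical K"
      unfolding hemispherical_def
    proof (intro conjI Ks bexI[of _ "-u"])
      show "-u \<in> sphere 0 1" using us by simp
      show "K \<inter> hemi (- u) = {}"
      proof (rule ccontr)
        assume "K \<inter> hemi (- u) \<noteq> {}"
        then obtain x where "x \<in> K" "0 \<le> (-u) \<bullet> x" by (auto simp: hemi_def)
        then show False using e(1) by (auto simp: K_def)
      qed
    qed
    have arcs: "sarc A B \<subseteq> K" if A: "A \<in> K" and B: "B \<in> K" for A B
    proof
      fix q assume "q \<in> sarc A B"
      then obtain t where t: "0 \<le> t" "t \<le> 1"
        and q: "q = ((1 - t) *\<^sub>R A + t *\<^sub>R B) /\<^sub>R norm ((1 - t) *\<^sub>R A + t *\<^sub>R B)"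
        unfolding sarc_def by blast
      define z where "z = (1 - t) *\<^sub>R A + t *\<^sub>R B"
      have As: "norm A = 1" "e \<le> u \<bullet> A" "\<And>w. w \<in> W \<Longrightarrow> 0 \<le> w \<bullet> A"
        using A by (auto simp: K_def polar_iff)
      have Bs: "norm B = 1" "e \<le> u \<bullet> B" "\<And>w. w \<in> W \<Longrightarrow> 0 \<le> w \<bullet> B"
        using B by (auto simp: K_def polar_iff)
      have uz: "e \<le> u \<bullet> z"
      proof -
        have "u \<bullet> z = (1 - t) * (u \<bullet> A) + t * (u \<bullet> B)" by (simp add: z_def inner_add_right)
        moreover have "(1 - t) * e \<le> (1 - t) * (u \<bullet> A)" using t As(2) by (intro mult_left_mono) auto
        moreover have "t * e \<le> t * (u \<bullet> B)" using t Bs(2) by (intro mult_left_mono) auto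
        ultimately show ?thesis by (simp add: algebra_simps)
      qed
      then have z0: "z \<noteq> 0" using e(1) by auto
      have nz: "norm z \<le> 1"
      proof -
        have "norm z \<le> norm ((1 - t) *\<^sub>R A) + norm (t *\<^sub>R B)" unfolding z_def by (rule norm_triangle_ineq)
        also have "\<dots> = (1 - t) + t" using t As(1) Bs(1) by simp
        finally show ?thesis by simp
      qed
      have npos: "0 < norm z" using z0 by simp
      have "q \<in> sphere 0 1" using z0 q by (simp add: z_def[symmetric])
      moreover have "0 \<le> w \<bullet> q" if w: "w \<in> W" for w
      proof -
        have "w \<bullet> z = (1 - t) * (w \<bullet> A) + t * (w \<bullet> B)" by (simp add: z_def inner_add_right)
        also have "\<dots> \<ge> 0" using t As(3)[OF w] Bs(3)[OF w] by simp
        finally have "0 \<le> w \<bullet> z" .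
        then show ?thesis using npos by (simp add: q z_def[symmetric])
      qed
      moreover have "e \<le> u \<bullet> q"
      proof -
        have "u \<bullet> q = (u \<bullet> z) / norm z" by (simp add: q z_def[symmetric] divide_inverse mult.commute)
        moreover have "u \<bullet> z \<le> (u \<bullet> z) / norm z"
          using nz npos uz e(1) by (simp add: le_divide_eq mult_left_le)
        ultimately show ?thesis using uz by simp
      qed
      ultimately show "q \<in> K" by (simp add: K_def polar_iff)
    qed
    have KS: "K \<in> Hsconv"
      using KinH hemi arcs by (simp add: Hsconv_def s_convex_def)
    have "approx (polar W) K d"
      unfolding approx_def
    proof (intro conjI ballI)
      fix k assume "k \<in> K"
      then show "\<exists>x\<in>polar W. dist x k < d" using Ksub d by (intro bexI[of _ k]) auto
    next
      fix x assume x: "x \<in> polar W"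
      have xs: "norm x = 1" and xw: "\<And>w. w \<in> W \<Longrightarrow> 0 \<le> w \<bullet> x" using x by (auto simp: polar_iff)
      have yw: "\<And>w. w \<in> W \<Longrightarrow> 0 \<le> w \<bullet> y" using uy(2) by (auto simp: polar_iff)
      have yn: "norm y = 1" using ys by simp
      define \<tau> where "\<tau> = 2 * e / c"
      have \<tau>: "0 < \<tau>" "\<tau> \<le> 1" using e c by (auto simp: \<tau>_def field_simps)
      define xt where "xt = x + \<tau> *\<^sub>R y"
      have uxt: "2 * e \<le> u \<bullet> xt"
      proof -
        have "u \<bullet> xt = u \<bullet> x + \<tau> * c" by (simp add: xt_def inner_add_right c_def)
        moreover have "\<tau> * c = 2 * e" using c by (simp add: \<tau>_def)
        moreover have "0 \<le> u \<bullet> x" using xw[OF uy(1)] .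
        ultimately show ?thesis by simp
      qed
      then have xt0: "xt \<noteq> 0" using e(1) by auto
      have nxt: "norm xt \<le> 2"
      proof -
        have "norm xt \<le> norm x + norm (\<tau> *\<^sub>R y)" unfolding xt_def by (rule norm_triangle_ineq)
        also have "\<dots> = 1 + \<tau>" using xs yn \<tau> by simp
        finally show ?thesis using \<tau> by simp
      qed
      have npos: "0 < norm xt" using xt0 by simp
      define z where "z = xt /\<^sub>R norm xt"
      have "z \<in> sphere 0 1" using xt0 by (simp add: z_def)
      moreover have "0 \<le> w \<bullet> z" if w: "w \<in> W" for w
      proof -
        have "w \<bullet> xt = w \<bullet> x + \<tau> * (w \<bullet> y)" by (simp add: xt_def inner_add_right)
        also have "\<dots> \<ge> 0" using xw[OF w] yw[OF w] \<tau> by simp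
        finally show ?thesis using npos by (simp add: z_def)
      qed
      moreover have "e \<le> u \<bullet> z"
      proof -
        have "u \<bullet> z = (u \<bullet> xt) / norm xt" by (simp add: z_def divide_inverse mult.commute)
        moreover have "e \<le> (u \<bullet> xt) / norm xt"
          using nxt npos uxt e(1) by (simp add: le_divide_eq) (use mult_left_mono[of "norm xt" 2 e] in linarith)
        ultimately show ?thesis by simp
      qed
      ultimately have zK: "z \<in> K" by (simp add: K_def polar_iff)
      have x0: "x \<noteq> 0" using xs by auto
      have "norm (x /\<^sub>R norm x - xt /\<^sub>R norm xt) \<le> 2 * norm (x - xt) / norm x"
        by (rule norm_normalize_diff[OF x0 xt0])
      also have "\<dots> = 2 * \<tau>" using xs yn \<tau> by (simp add: xt_def)
      also have "\<dots> = 4 * e / c" by (simp add: \<tau>_def)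
      also have "\<dots> \<le> d / 2" using e(3) c by (simp add: field_simps)
      finally have "dist x z \<le> d/2" using xs by (simp add: z_def dist_norm)
      then have "dist x z < d" using d by simp
      then show "\<exists>y\<in>K. dist x y < d" using zK by blast
    qed
    then show "\<exists>K\<in>Hsconv. approx (polar W) K d" using KS by blast
  qed
qed


lemma not_hemispherical_hemi:
  fixes P :: "'a::euclidean_space"
  assumes P: "P \<in> Basis" and dim: "DIM('a) \<ge> 2"
  shows "\<not> hemispherical (hemi P)"
proof
  assume "hemispherical (hemi P)"
  then obtain Q where Q: "Q \<in> sphere 0 1" "hemi P \<inter> hemi Q = {}" by (auto simp: hemispherical_def)
  have Ps: "P \<in> sphere 0 1" using P by simp
  show False
  proof (cases "P + Q = 0")
    case False
    define z where "z = (P + Q) /\<^sub>R norm (P + Q)"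
    have zs: "z \<in> sphere 0 1" using False by (simp add: z_def)
    have b: "-1 \<le> P \<bullet> Q" using inner_sphere_bounds[OF Ps Q(1)] by simp
    have n: "0 < norm (P + Q)" using False by simp
    have "P \<bullet> (P + Q) \<ge> 0" using b Ps by (simp add: inner_add_right dot_square_norm)
    then have "P \<bullet> z \<ge> 0" using n by (simp add: z_def)
    moreover have "Q \<bullet> (P + Q) \<ge> 0" using b Q(1) by (simp add: inner_add_right dot_square_norm inner_commute)
    then have "Q \<bullet> z \<ge> 0" using n by (simp add: z_def)
    ultimately have "z \<in> hemi P \<inter> hemi Q" using zs by (simp add: hemi_def)
    then show False using Q(2) by blast
  next
    case True
    then have Qm: "Q = -P" by (simp add: eq_neg_iff_add_eq_0 add.commute)
    have "card (Basis :: 'a set) \<ge> 2" using dim by simp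
    then obtain b where b: "b \<in> Basis" "b \<noteq> P"
    proof -
      have "\<not> Basis \<subseteq> {P}"
      proof
        assume "Basis \<subseteq> {P}"
        then have "card (Basis :: 'a set) \<le> card {P}" by (intro card_mono) auto
        then show False using \<open>card (Basis :: 'a set) \<ge> 2\<close> by simp
      qed
      then show ?thesis using that by blast
    qed
    have "P \<bullet> b = 0" using b P by (simp add: inner_not_same_Basis)
    then have "b \<in> hemi P \<inter> hemi Q" using b(1) Qm by (simp add: hemi_def)
    then show False using Q(2) by blast
  qed
qed

lemma polar_image_ne:
  assumes dim: "DIM('a::euclidean_space) \<ge> 2"
  shows "polar ` (Hsconv :: 'a set set) \<noteq> Hsconv"
proof
  assume eq: "polar ` (Hsconv :: 'a set set) = Hsconv"
  obtain P :: 'a where P: "P \<in> Basis" using nonempty_Basis by blast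
  have Ps: "P \<in> sphere 0 1" using P by simp
  have "{P} \<in> Hsconv"
    unfolding Hsconv_def Hspace_def s_convex_def hemispherical_def
  proof (intro CollectI conjI ballI bexI[of _ "-P"])
    show "{P} \<subseteq> sphere 0 1" "{P} \<subseteq> sphere 0 1" using Ps by auto
    show "{P} \<noteq> {}" by simp
    show "closed {P}" by simp
    show "-P \<in> sphere 0 1" using Ps by simp
    show "{P} \<inter> hemi (- P) = {}" using Ps by (auto simp: hemi_def dot_square_norm)
    fix A B assume "A \<in> {P}" "B \<in> {P}"
    then show "sarc A B \<subseteq> {P}" using Ps
      by (auto simp: sarc_def scaleR_left_distrib[symmetric])
  qed
  then have "polar {P} \<in> Hsconv" using eq by blast
  moreover have "polar {P} = hemi P" by (auto simp: polar_def hemi_def)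
  ultimately have "hemispherical (hemi P)" by (simp add: Hsconv_def s_convex_def)
  then show False using not_hemispherical_hemi[OF P dim] by blast
qed

theorem proposition2:
  assumes "DIM('a::euclidean_space) \<ge> 2"
  shows "hclosure (Hsconv :: 'a set set) \<subseteq> Hpolar
       \<and> polar ` (Hsconv :: 'a set set) \<noteq> Hsconv
       \<and> polar ` hclosure (Hsconv :: 'a set set) = hclosure Hsconv
       \<and> inj_on polar (hclosure (Hsconv :: 'a set set))"
proof (intro conjI)
  show "hclosure (Hsconv :: 'a set set) \<subseteq> Hpolar"
  proof
    fix W :: "'a set" assume W: "W \<in> hclosure Hsconv"
    have "polar W \<in> Hspace" using cl_Hspace[OF cl_polar[OF W]] .
    then have "polar W \<noteq> {}" by (simp add: Hspace_def)
    then show "W \<in> Hpolar" using cl_Hspace[OF W] by (simp add: Hpolar_def)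
  qed
  show "polar ` (Hsconv :: 'a set set) \<noteq> Hsconv" by (rule polar_image_ne[OF assms])
  show "polar ` hclosure (Hsconv :: 'a set set) = hclosure Hsconv"
  proof
    show "polar ` hclosure (Hsconv :: 'a set set) \<subseteq> hclosure Hsconv"
      using cl_polar by blast
    show "hclosure (Hsconv :: 'a set set) \<subseteq> polar ` hclosure Hsconv"
    proof
      fix W :: "'a set" assume W: "W \<in> hclosure Hsconv"
      have "W = polar (polar W)" using cl_bipolar[OF W] by simp
      then show "W \<in> polar ` hclosure Hsconv" using cl_polar[OF W] by blast
    qed
  qed
  show "inj_on polar (hclosure (Hsconv :: 'a set set))"
    by (rule inj_onI) (metis cl_bipolar)
qed

end
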